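(* For every positive integer $n$, \[ \sum_{\pi \in \mathcal{D}(n)} (-1)^{\#(\pi)-1} s(\pi)^2 = 2\sigma(n) - d(n) + 2p^{(2)}(n). \]
   Context: $\mathcal{D}(n)$ is the set of partitions of $n$ into distinct parts; for a partition $\pi$, $s(\pi)$ is its smallest part and $\#(\pi)$ its number of parts. $\sigma(n)=\sum_{d\mid n} d$, $d(n)$ is the number of positive divisors of $n$, and $p^{(2)}(n)$ is the number of partitions of $n$ having exactly two distinct part sizes. *)

theory Defs
  imports Main "HOL-Library.Multiset"
begin

definition distinct_partitions :: "nat \<Rightarrow> nat set set" where
  "distinct_partitions n = {P. finite P \<and> 0 \<notin> P \<and> \<Sum>P = n}"

definition spart :: "nat set \<Rightarrow> nat" where "spart P = Min P"
definition nparts :: "nat set \<Rightarrow> nat" where "nparts P = card P"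

definition partitions :: "nat \<Rightarrow> nat multiset set" where
  "partitions n = {M. 0 \<notin># M \<and> sum_mset M = n}"

definition p2 :: "nat \<Rightarrow> nat" where
  "p2 n = card {M \<in> partitions n. card (set_mset M) = 2}"

definition sigma :: "nat \<Rightarrow> nat" where "sigma n = \<Sum>{d. d dvd n}"
definition ndiv :: "nat \<Rightarrow> nat" where "ndiv n = card {d. d dvd n}"

end

theory Submission
  imports Defs "HOL-Computational_Algebra.Polynomial" "HOL-Computational_Algebra.Formal_Power_Series"
begin
unbundle fps_syntax


abbreviation XX :: "int fps" where "XX \<equiv> fps_X"

definition ginv :: "nat \<Rightarrow> int fps" where
  "ginv k = Abs_fps (\<lambda>n. if k dvd n then 1 else 0)"
definition geo :: "nat \<Rightarrow> int fps" where "geo k = XX^k * ginv k"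

lemma ginv_inv: assumes "k \<ge> 1" shows "(1 - XX^k) * ginv k = 1"
proof (rule fps_ext)
  fix n
  have e: "(1 - XX^k) * ginv k = ginv k - XX^k * ginv k" by (simp add: algebra_simps)
  show "((1 - XX^k) * ginv k) $ n = 1 $ n"
  proof (cases "n < k")
    case True
    then have "k dvd n \<longleftrightarrow> n = 0" using assms by (auto dest: dvd_imp_le)
    then show ?thesis using True unfolding e by (simp add: fps_X_power_mult_nth ginv_def)
  next
    case False
    then have "k dvd n \<longleftrightarrow> k dvd (n - k)" by (simp add: dvd_minus_self)
    then show ?thesis using False assms unfolding e by (simp add: fps_X_power_mult_nth ginv_def)
  qed
qed

lemma geo_nth: assumes "k \<ge> 1" shows "geo k $ n = (if 0 < n \<and> k dvd n then 1 else 0)"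
proof (cases "n < k")
  case True
  then have "\<not> (0 < n \<and> k dvd n)" by (auto dest: dvd_imp_le)
  then show ?thesis using True by (simp add: geo_def fps_X_power_mult_nth)
next
  case False
  then have "k dvd n \<longleftrightarrow> k dvd (n - k)" by (simp add: dvd_minus_self)
  then show ?thesis using False assms by (simp add: geo_def fps_X_power_mult_nth ginv_def)
qed

lemma geo_rel: assumes "k \<ge> 1" shows "(1 - XX^k) * geo k = XX^k"
proof -
  have "(1 - XX^k) * geo k = XX^k * ((1 - XX^k) * ginv k)" by (simp add: geo_def algebra_simps)
  then show ?thesis using ginv_inv[OF assms] by simp
qed

lemma prod_expand:
  assumes "finite K"
  shows "(\<Prod>k\<in>K. 1 - XX^k) = (\<Sum>B\<in>Pow K. fps_const ((-1)^card B) * XX^(\<Sum>B))"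
proof -
  have "(\<Prod>k\<in>K. 1 - XX^k) = (\<Prod>k\<in>K. (- (XX^k)) + 1)" by simp
  also have "\<dots> = (\<Sum>B\<in>Pow K. (\<Prod>k\<in>B. - (XX^k)) * (\<Prod>k\<in>K-B. 1))"
    by (rule prod_add[OF assms])
  also have "\<dots> = (\<Sum>B\<in>Pow K. fps_const ((-1)^card B) * XX^(\<Sum>B))"
  proof (rule sum.cong[OF refl])
    fix B assume "B \<in> Pow K"
    have "(\<Prod>k\<in>B. - (XX^k)) = (\<Prod>k\<in>B. (-1) * XX^k)" by simp
    also have "\<dots> = (-1) ^ card B * XX^(\<Sum>B)"
      by (simp only: prod.distrib prod_constant power_sum)
    also have "(-1::int fps) ^ card B = fps_const ((-1)^card B)"
      by (simp only: fps_const_power[symmetric] fps_const_neg[symmetric] fps_const_1_eq_1)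
    finally show "(\<Prod>k\<in>B. - (XX^k)) * (\<Prod>k\<in>K-B. 1) = fps_const ((-1)^card B) * XX^(\<Sum>B)"
      by simp
  qed
  finally show ?thesis .
qed

lemma prod_expand_nth:
  assumes "finite K"
  shows "(\<Prod>k\<in>K. 1 - XX^k) $ m = (\<Sum>B\<in>{B\<in>Pow K. \<Sum>B = m}. (-1)^card B)"
proof -
  have "(\<Prod>k\<in>K. 1 - XX^k) $ m = (\<Sum>B\<in>Pow K. if \<Sum>B = m then (-1)^card B else 0)"
    unfolding prod_expand[OF assms] fps_sum_nth
    by (intro sum.cong refl) (simp add: fps_X_power_nth)
  also have "\<dots> = (\<Sum>B\<in>{B\<in>Pow K. \<Sum>B = m}. (-1)^card B)"
    using assms by (subst sum.inter_filter) auto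
  finally show ?thesis .
qed

definition PP :: "nat \<Rightarrow> nat \<Rightarrow> int fps" where "PP N s = (\<Prod>k\<in>{s<..N}. 1 - XX^k)"
definition phi :: "nat \<Rightarrow> nat \<Rightarrow> int fps" where "phi N s = XX^s * PP N s"
definition Phi :: "nat \<Rightarrow> int fps poly" where "Phi N = (\<Sum>s\<le>N. monom (phi N s) s)"
definition pc :: "int fps \<Rightarrow> int fps poly \<Rightarrow> int fps poly \<Rightarrow> bool" where
  "pc c p q \<longleftrightarrow> (\<exists>r. p - q = smult c r)"

lemma coeff_Phi: "coeff (Phi N) t = (if t \<le> N then phi N t else 0)"
  unfolding Phi_def coeff_sum coeff_monom by (simp add: sum.delta)

lemma coeff_pcomp: "coeff (pcompose p [:0,c:]) t = coeff p t * c^t" for p :: "int fps poly"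
proof (induction p arbitrary: t)
  case 0
  then show ?case by simp
next
  case (pCons a p)
  have "pcompose (pCons a p) [:0,c:] = [:a:] + pCons 0 (smult c (pcompose p [:0,c:]))"
    by (simp add: pcompose_pCons)
  then show ?case using pCons by (cases t) (simp_all add: coeff_pCons)
qed

lemma PP_rec: assumes "1 \<le> t" "t \<le> N" shows "PP N (t-1) = (1 - XX^t) * PP N t"
proof -
  have "{t-1<..N} = insert t {t<..N}" using assms by auto
  then show ?thesis unfolding PP_def by simp
qed

lemma phi_rec: assumes "1 \<le> t" "t \<le> N" shows "XX * phi N (t-1) = phi N t - XX^t * phi N t"
proof -
  have "XX * phi N (t-1) = XX * XX^(t-1) * PP N (t-1)" by (simp add: phi_def)
  also have "XX * XX^(t-1) = XX^t" using assms by (simp flip: power_Suc)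
  also have "XX^t * PP N (t-1) = XX^t * PP N t - XX^t * (XX^t * PP N t)"
    unfolding PP_rec[OF assms] by (simp add: algebra_simps)
  finally show ?thesis by (simp add: phi_def)
qed

lemma coeff_mult_lin: "coeff (p * [:1, b:]) t = coeff p t + (if t = 0 then 0 else b * coeff p (t-1))"
  for p :: "int fps poly"
  by (cases t) (simp_all add: mult_pCons_right coeff_pCons)

lemma func_eq: "Phi N * [:1, -XX:] = pcompose (Phi N) [:0,XX:] - monom (XX * phi N N) (Suc N)"
proof (rule poly_eqI)
  fix t
  show "coeff (Phi N * [:1, -XX:]) t = coeff (pcompose (Phi N) [:0,XX:] - monom (XX * phi N N) (Suc N)) t"
  proof (cases t)
    case 0
    then show ?thesis by (simp add: coeff_mult_lin coeff_pcomp coeff_Phi poly_0_coeff_0)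
  next
    case (Suc m)
    show ?thesis
    proof (cases "m < N")
      case True
      then show ?thesis using Suc phi_rec[of t N]
        by (simp add: coeff_mult_lin coeff_pcomp coeff_Phi algebra_simps)
    next
      case False
      then show ?thesis using Suc
        by (auto simp add: coeff_mult_lin coeff_pcomp coeff_Phi coeff_monom)
    qed
  qed
qed

lemma pc_refl: "pc c p p" unfolding pc_def by (rule exI[of _ 0]) simp

lemma pc_trans: "pc c p q \<Longrightarrow> pc c q w \<Longrightarrow> pc c p w"
  unfolding pc_def by (metis (no_types, lifting) diff_add_cancel add_diff_eq smult_add_right)

lemma pc_mult: "pc c p q \<Longrightarrow> pc c (p * s) (q * s)"
  unfolding pc_def by (metis left_diff_distrib mult_smult_left)

lemma pc_pcomp: "pc c p q \<Longrightarrow> pc c (pcompose p a) (pcompose q a)"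
  unfolding pc_def by (metis pcompose_diff pcompose_smult)

lemma lin_pcomp: "pcompose [:1, -XX:] [:0, (XX^j):] = [:1, - (XX^(Suc j)):]"
  by (simp add: pcompose_pCons)

lemma comp_comp: "pcompose (pcompose p [:0,a:]) [:0,b:] = pcompose p [:0, a*b:]" for p :: "int fps poly"
proof -
  have "pcompose [:0,a:] [:0,b:] = [:0, a*b:]" by (simp add: pcompose_pCons)
  then show ?thesis by (metis pcompose_assoc)
qed

lemma monom_pcomp: "pcompose (monom a n) [:0,c:] = monom (a * c^n) n" for a c :: "int fps"
  by (rule poly_eqI) (simp add: coeff_pcomp coeff_monom)

definition GG :: "nat \<Rightarrow> int fps poly" where "GG N = (\<Prod>k\<in>{1..N}. [:1, - (XX^k):])"

lemma iterate: "pc (XX^Suc N) (Phi N * (\<Prod>k\<in>{1..j}. [:1, - (XX^k):])) (pcompose (Phi N) [:0, (XX^j):])"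
proof (induction j)
  case 0
  then show ?case by (simp add: pc_refl)
next
  case (Suc j)
  have A: "Phi N * (\<Prod>k\<in>{1..Suc j}. [:1, - (XX^k):]) = (Phi N * (\<Prod>k\<in>{1..j}. [:1, - (XX^k):])) * [:1, - (XX^(Suc j)):]"
    by (simp only: prod.cl_ivl_Suc) (simp add: mult.commute mult.left_commute)
  have B: "pc (XX^Suc N) ((Phi N * (\<Prod>k\<in>{1..j}. [:1, - (XX^k):])) * [:1, - (XX^(Suc j)):]) (pcompose (Phi N) [:0, (XX^j):] * [:1, - (XX^(Suc j)):])"
    by (rule pc_mult[OF Suc])
  have C: "pcompose (Phi N) [:0, (XX^j):] * [:1, - (XX^(Suc j)):] = pcompose (Phi N * [:1, -XX:]) [:0, (XX^j):]"
    by (simp only: pcompose_mult lin_pcomp)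
  have D: "pcompose (Phi N * [:1, -XX:]) [:0, (XX^j):] = pcompose (Phi N) [:0, (XX^(Suc j)):] - smult (XX^Suc N) (monom ((XX^j)^Suc N) (Suc N))"
  proof -
    have m: "monom (XX * phi N N * (XX^j)^Suc N) (Suc N) = smult (XX^Suc N) (monom ((XX^j)^Suc N) (Suc N))"
      by (simp add: phi_def PP_def smult_monom)
    have x: "XX * XX^j = XX^Suc j" by simp
    show ?thesis unfolding func_eq pcompose_diff comp_comp monom_pcomp m x by (rule refl)
  qed
  have E: "pc (XX^Suc N) (pcompose (Phi N) [:0, (XX^j):] * [:1, - (XX^(Suc j)):]) (pcompose (Phi N) [:0, (XX^(Suc j)):])"
    unfolding pc_def C D by (rule exI[of _ "- monom ((XX^j)^Suc N) (Suc N)"]) simp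
  show ?case unfolding A by (rule pc_trans[OF B E])
qed



lemma smult_sum': "smult c (sum f A) = (\<Sum>x\<in>A. smult c (f x))"
  by (induction A rule: infinite_finite_induct) (simp_all add: smult_add_right)

lemma pderiv_sum': "pderiv (sum f A) = (\<Sum>x\<in>A. pderiv (f x))"
  using higher_pderiv_sum[of 1 f A] by simp

lemma final_cong: assumes "N \<ge> 1"
  shows "pc (XX^Suc N) (pcompose (Phi N) [:0,(XX^N):]) [:phi N 0:]"
proof -
  have "pcompose (Phi N) [:0,(XX^N):] = (\<Sum>s\<le>N. monom (phi N s * (XX^N)^s) s)"
    unfolding Phi_def pcompose_sum monom_pcomp ..
  also have "{..N} = insert 0 {1..N}" by auto
  finally have e: "pcompose (Phi N) [:0,(XX^N):] = monom (phi N 0) 0 + (\<Sum>s\<in>{1..N}. monom (phi N s * (XX^N)^s) s)"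
    by simp
  have "(\<Sum>s\<in>{1..N}. monom (phi N s * (XX^N)^s) s) = smult (XX^Suc N) (\<Sum>s\<in>{1..N}. monom (XX^(s + N*s - Suc N) * PP N s) s)"
    unfolding smult_sum'
  proof (rule sum.cong[OF refl])
    fix s assume s: "s \<in> {1..N}"
    have "XX^Suc N * XX^(s + N*s - Suc N) = XX^(s + N*s)"
    proof -
      have "N \<le> N*s" using s by simp
      moreover have "1 \<le> s" using s by simp
      ultimately have "Suc N + (s + N*s - Suc N) = s + N*s" by linarith
      then show ?thesis unfolding power_add[symmetric] by (simp only:)
    qed
    then have "phi N s * (XX^N)^s = XX^Suc N * (XX^(s + N*s - Suc N) * PP N s)"
      unfolding phi_def power_mult[symmetric] by (simp add: power_add mult.commute mult.left_commute)
    then show "monom (phi N s * (XX^N)^s) s = smult (XX^Suc N) (monom (XX^(s + N*s - Suc N) * PP N s) s)"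
      by (simp add: smult_monom)
  qed
  then show ?thesis unfolding pc_def e by (auto simp: monom_0)
qed

lemma main_cong: assumes "N \<ge> 1" shows "pc (XX^Suc N) (Phi N * GG N) [:phi N 0:]"
  unfolding GG_def by (rule pc_trans[OF iterate final_cong[OF assms]])



definition EE :: "nat \<Rightarrow> int fps" where "EE N = (\<Prod>k\<in>{1..N}. 1 - XX^k)"
definition LL :: "nat \<Rightarrow> int fps" where "LL N = (\<Sum>a\<in>{1..N}. geo a)"
definition MM :: "nat \<Rightarrow> int fps" where "MM N = (\<Sum>a\<in>{1..N}. \<Sum>b\<in>{1..N}-{a}. geo a * geo b)"
definition SS :: "nat \<Rightarrow> int fps" where "SS N = (\<Sum>a\<in>{1..N}. geo a * geo a)"

lemma phi0: "phi N 0 = EE N"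
proof -
  have "{0<..N} = {1..N}" by auto
  then show ?thesis by (simp add: phi_def PP_def EE_def)
qed

lemma LL_sq: "LL N * LL N = MM N + SS N"
proof -
  have "LL N * LL N = (\<Sum>a\<in>{1..N}. \<Sum>b\<in>{1..N}. geo a * geo b)"
    unfolding LL_def by (simp add: sum_product)
  also have "\<dots> = (\<Sum>a\<in>{1..N}. geo a * geo a + (\<Sum>b\<in>{1..N}-{a}. geo a * geo b))"
    by (intro sum.cong refl) (simp add: sum.remove)
  finally show ?thesis by (simp add: MM_def SS_def sum.distrib)
qed

lemma remove_geo:
  assumes "finite K" "a \<in> K" "\<forall>k\<in>K. k \<ge> 1"
  shows "(\<Prod>k\<in>K-{a}. 1 - XX^k) * XX^a = (\<Prod>k\<in>K. 1 - XX^k) * geo a"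
proof -
  have "(\<Prod>k\<in>K. 1 - XX^k) = (1 - XX^a) * (\<Prod>k\<in>K-{a}. 1 - XX^k)"
    using assms by (simp add: prod.remove)
  then have "(\<Prod>k\<in>K. 1 - XX^k) * geo a = (\<Prod>k\<in>K-{a}. 1 - XX^k) * ((1 - XX^a) * geo a)"
    by (simp only: mult_ac)
  moreover have "(1 - XX^a) * geo a = XX^a" using geo_rel assms by simp
  ultimately show ?thesis by simp
qed

lemma EU: "EE N * (\<Prod>k\<in>{1..N}. ginv k) = 1"
  unfolding EE_def prod.distrib[symmetric] by (rule prod.neutral) (simp add: ginv_inv)

lemma pderiv_lin: "pderiv [:1, - (XX^k):] = [:- (XX^k):]"
  by (simp add: pderiv_pCons)

lemma G0: "poly (GG N) 1 = EE N"
  unfolding GG_def EE_def poly_prod by simp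

lemma pderiv_G: "pderiv (GG N) = (\<Sum>a\<in>{1..N}. (\<Prod>k\<in>{1..N}-{a}. [:1, - (XX^k):]) * [:- (XX^a):])"
  unfolding GG_def pderiv_prod pderiv_lin ..

lemma G1: "poly (pderiv (GG N)) 1 = - (EE N * LL N)"
proof -
  have "poly (pderiv (GG N)) 1 = (\<Sum>a\<in>{1..N}. - ((\<Prod>k\<in>{1..N}-{a}. 1 - XX^k) * XX^a))"
    unfolding pderiv_G poly_sum poly_mult poly_prod by simp
  also have "\<dots> = (\<Sum>a\<in>{1..N}. - (EE N * geo a))"
    unfolding EE_def by (intro sum.cong refl) (subst remove_geo, auto)
  finally show ?thesis by (simp add: LL_def sum_distrib_left sum_negf)
qed

lemma G2: "poly (pderiv (pderiv (GG N))) 1 = EE N * MM N"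
proof -
  have d: "pderiv ((\<Prod>k\<in>{1..N}-{a}. [:1, - (XX^k):]) * [:- (XX^a):]) =
     [:- (XX^a):] * (\<Sum>b\<in>{1..N}-{a}. (\<Prod>k\<in>{1..N}-{a}-{b}. [:1, - (XX^k):]) * [:- (XX^b):])" for a
    unfolding pderiv_mult pderiv_prod pderiv_lin by simp
  have "poly (pderiv (pderiv (GG N))) 1 = (\<Sum>a\<in>{1..N}. \<Sum>b\<in>{1..N}-{a}. ((\<Prod>k\<in>{1..N}-{a}-{b}. 1 - XX^k) * XX^b) * XX^a)"
    unfolding pderiv_G pderiv_sum' d poly_sum poly_mult poly_prod
    by (simp add: sum_distrib_left mult.commute mult.left_commute)
  also have "\<dots> = (\<Sum>a\<in>{1..N}. \<Sum>b\<in>{1..N}-{a}. EE N * geo a * geo b)"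
  proof (intro sum.cong refl)
    fix a b assume a: "a \<in> {1..N}" and b: "b \<in> {1..N}-{a}"
    have "(\<Prod>k\<in>{1..N}-{a}-{b}. 1 - XX^k) * XX^b = (\<Prod>k\<in>{1..N}-{a}. 1 - XX^k) * geo b"
      using b by (subst remove_geo) auto
    moreover have "(\<Prod>k\<in>{1..N}-{a}. 1 - XX^k) * XX^a = EE N * geo a"
      unfolding EE_def using a by (subst remove_geo) auto
    ultimately show "((\<Prod>k\<in>{1..N}-{a}-{b}. 1 - XX^k) * XX^b) * XX^a = EE N * geo a * geo b"
      by (metis mult.commute mult.left_commute)
  qed
  finally show ?thesis by (simp add: MM_def sum_distrib_left mult.assoc)
qed



lemma Phi0: "poly (Phi N) 1 = (\<Sum>s\<le>N. phi N s)"
  unfolding Phi_def poly_sum poly_monom by simp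

lemma Phi1: "poly (pderiv (Phi N)) 1 = (\<Sum>s\<le>N. of_nat s * phi N s)"
  unfolding Phi_def pderiv_sum' pderiv_monom poly_sum poly_monom by simp

lemma Phi2: "poly (pderiv (pderiv (Phi N))) 1 = (\<Sum>s\<le>N. of_nat (s-1) * (of_nat s * phi N s))"
  unfolding Phi_def pderiv_sum' pderiv_monom poly_sum poly_monom by simp

lemma Phi21: "poly (pderiv (pderiv (Phi N))) 1 + poly (pderiv (Phi N)) 1 = (\<Sum>s\<le>N. of_nat (s^2) * phi N s)"
  unfolding Phi1 Phi2 sum.distrib[symmetric]
proof (intro sum.cong refl)
  fix s :: nat
  have "of_nat (s-1) * of_nat s + of_nat s = (of_nat (s^2) :: int fps)"
    by (cases s) (simp_all add: power2_eq_square algebra_simps)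
  then show "of_nat (s-1) * (of_nat s * phi N s) + of_nat s * phi N s = of_nat (s^2) * phi N s"
    by (metis distrib_right mult.assoc)
qed

lemma key: assumes "N \<ge> 1"
  shows "XX^Suc N dvd (\<Sum>s\<le>N. of_nat (s^2) * phi N s) - (MM N + 2 * SS N + LL N)"
proof -
  define c where "c = XX^Suc N"
  obtain r where r: "Phi N * GG N - [:EE N:] = smult c r"
    using main_cong[OF assms] unfolding pc_def phi0 c_def by blast
  define p0 where "p0 = poly (Phi N) 1"
  define p1 where "p1 = poly (pderiv (Phi N)) 1"
  define p2' where "p2' = poly (pderiv (pderiv (Phi N))) 1"
  define E where "E = EE N"
  define L where "L = LL N"
  define M where "M = MM N"
  define S where "S = SS N"
  define U where "U = (\<Prod>k\<in>{1..N}. ginv k)"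
  have EU1: "E * U = 1" unfolding E_def U_def by (rule EU)
  have a: "c dvd p0 * E - E"
  proof -
    have "poly (Phi N * GG N) 1 - E = c * poly r 1"
      using arg_cong[OF r, of "\<lambda>p. poly p 1"] by (simp add: E_def)
    then show ?thesis by (simp add: p0_def E_def G0)
  qed
  have r1: "pderiv (Phi N * GG N) = smult c (pderiv r)"
    using arg_cong[OF r, of pderiv] by (simp add: pderiv_diff pderiv_smult)
  have b: "c dvd p0 * (- (E * L)) + E * p1"
  proof -
    have "poly (pderiv (Phi N * GG N)) 1 = c * poly (pderiv r) 1" using r1 by simp
    then show ?thesis unfolding pderiv_mult by (simp add: p0_def p1_def E_def L_def G0 G1)
  qed
  have c2: "c dvd p0 * (E * M) + 2 * (- (E * L)) * p1 + E * p2'"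
  proof -
    have "pderiv (pderiv (Phi N * GG N)) = smult c (pderiv (pderiv r))"
      using arg_cong[OF r1, of pderiv] by (simp add: pderiv_smult)
    then have "poly (pderiv (pderiv (Phi N * GG N))) 1 = c * poly (pderiv (pderiv r)) 1" by simp
    moreover have "pderiv (pderiv (Phi N * GG N)) = Phi N * pderiv (pderiv (GG N)) + pderiv (GG N) * pderiv (Phi N) + (GG N * pderiv (pderiv (Phi N)) + pderiv (Phi N) * pderiv (GG N))"
      by (simp only: pderiv_mult pderiv_add)
    then have "poly (pderiv (pderiv (Phi N * GG N))) 1 = poly (Phi N) 1 * poly (pderiv (pderiv (GG N))) 1 + poly (pderiv (GG N)) 1 * poly (pderiv (Phi N)) 1 + (poly (GG N) 1 * poly (pderiv (pderiv (Phi N))) 1 + poly (pderiv (Phi N)) 1 * poly (pderiv (GG N)) 1)"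
      by (simp only: poly_add poly_mult)
    then have "poly (pderiv (pderiv (Phi N * GG N))) 1 = p0 * (E * M) + (- (E * L)) * p1 + (E * p2' + p1 * (- (E * L)))"
      unfolding p0_def p1_def p2'_def G0 G1 G2 E_def L_def M_def .
    ultimately have "c dvd p0 * (E * M) + (- (E * L)) * p1 + (E * p2' + p1 * (- (E * L)))"
      by (metis dvd_triv_left)
    moreover have "p0 * (E * M) + (- (E * L)) * p1 + (E * p2' + p1 * (- (E * L))) = p0 * (E * M) + 2 * (- (E * L)) * p1 + E * p2'"
      by (simp add: algebra_simps mult_2)
    ultimately show ?thesis by metis
  qed
  have a': "c dvd p0 - 1"
  proof -
    have "c dvd (p0 * E - E) * U" using a by simp
    also have "(p0 * E - E) * U = (p0 - 1) * (E * U)" by (simp add: algebra_simps)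
    also have "\<dots> = p0 - 1" using EU1 by simp
    finally show ?thesis .
  qed
  have b': "c dvd p1 - L"
  proof -
    have "c dvd (p0 * (- (E * L)) + E * p1) * U + (p0 - 1) * L" using b a' by simp
    also have "(p0 * (- (E * L)) + E * p1) * U + (p0 - 1) * L = (p1 - p0 * L) * (E * U) + (p0 - 1) * L"
      by (simp add: algebra_simps)
    also have "\<dots> = p1 - L"
      using EU1 by (simp add: algebra_simps)
    finally show ?thesis .
  qed
  have c': "c dvd p0 * M - 2 * L * p1 + p2'"
  proof -
    have "c dvd (p0 * (E * M) + 2 * (- (E * L)) * p1 + E * p2') * U" using c2 by simp
    also have "(p0 * (E * M) + 2 * (- (E * L)) * p1 + E * p2') * U = (p0 * M - 2 * L * p1 + p2') * (E * U)"
      by (simp add: algebra_simps)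
    also have "\<dots> = p0 * M - 2 * L * p1 + p2'"
      using EU1 by simp
    finally show ?thesis .
  qed
  have LS: "L * L = M + S" unfolding L_def M_def S_def by (rule LL_sq)
  have "c dvd (p0 * M - 2 * L * p1 + p2') - (p0 - 1) * M + (2 * L + 1) * (p1 - L)"
    using a' b' c' by (simp add: dvd_diff dvd_add)
  also have "(p0 * M - 2 * L * p1 + p2') - (p0 - 1) * M + (2 * L + 1) * (p1 - L) = (p2' + p1) - (M + 2 * S + L)"
  proof -
    have "(p0 * M - 2 * L * p1 + p2') - (p0 - 1) * M + (2 * L + 1) * (p1 - L) = p2' + p1 + M - 2 * (L * L) - L"
      by (simp add: algebra_simps)
    then show ?thesis unfolding LS by (simp add: algebra_simps)
  qed
  finally show ?thesis
    unfolding c_def p2'_def p1_def Phi21 M_def S_def L_def .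
qed



lemma nth_ofnat_mult: "((of_nat k :: int fps) * f) $ n = int k * f $ n"
proof -
  have "(of_nat k :: int fps) = fps_const (int k)" by (induction k) (simp_all add: fps_const_add[symmetric])
  then show ?thesis by simp
qed

lemma Dfin: "distinct_partitions n \<subseteq> Pow {1..n}"
proof
  fix P assume "P \<in> distinct_partitions n"
  then have P: "finite P" "0 \<notin> P" "\<Sum>P = n" by (auto simp: distinct_partitions_def)
  have "x \<le> n" if "x \<in> P" for x using P that member_le_sum[of x P "\<lambda>x. x"] by auto
  moreover have "x \<ge> 1" if "x \<in> P" for x using P that by (cases x) auto
  ultimately show "P \<in> Pow {1..n}" by auto
qed

lemma Dslice:
  assumes s: "s \<in> {1..n}"
  shows "{P \<in> distinct_partitions n. Min P = s} = insert s ` {B \<in> Pow {s<..n}. \<Sum>B = n - s}"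
proof (intro equalityI subsetI)
  fix P assume "P \<in> {P \<in> distinct_partitions n. Min P = s}"
  then have P: "finite P" "0 \<notin> P" "\<Sum>P = n" "Min P = s" by (auto simp: distinct_partitions_def)
  have ne: "P \<noteq> {}" using P s by auto
  have sP: "s \<in> P" using Min_in[OF P(1) ne] P(4) by simp
  have "x \<le> n" if "x \<in> P" for x using P that member_le_sum[of x P "\<lambda>x. x"] by auto
  moreover have "s \<le> x" if "x \<in> P" for x using P that Min_le[OF P(1)] by auto
  ultimately have sub: "P - {s} \<subseteq> {s<..n}" by force
  have "\<Sum>(P - {s}) = n - s" using P sP by (simp add: sum_diff1_nat)
  moreover have "P = insert s (P - {s})" using sP by auto
  ultimately show "P \<in> insert s ` {B \<in> Pow {s<..n}. \<Sum>B = n - s}" using sub by blast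
next
  fix P assume "P \<in> insert s ` {B \<in> Pow {s<..n}. \<Sum>B = n - s}"
  then obtain B where B: "B \<subseteq> {s<..n}" "\<Sum>B = n - s" and PB: "P = insert s B" by auto
  have fB: "finite B" using B(1) finite_subset by blast
  have sB: "s \<notin> B" using B by auto
  have "\<Sum>P = n" using PB fB sB B(2) s by simp
  moreover have "0 \<notin> P" using PB B(1) s by auto
  moreover have "Min P = s" unfolding PB using fB B(1) by (intro Min_eqI) auto
  ultimately show "P \<in> {P \<in> distinct_partitions n. Min P = s}"
    using PB fB by (simp add: distinct_partitions_def)
qed

lemma LHS_eq:
  assumes "n \<ge> 1"
  shows "(\<Sum>P\<in>distinct_partitions n. (-1::int) ^ (nparts P - 1) * int (spart P) ^ 2)
       = (\<Sum>s\<le>n. of_nat (s^2) * phi n s) $ n"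
proof -
  define f where "f P = (-1::int) ^ (nparts P - 1) * int (spart P) ^ 2" for P
  have finD: "finite (distinct_partitions n)" using Dfin finite_subset by blast
  have img: "Min ` distinct_partitions n \<subseteq> {1..n}"
  proof
    fix s assume "s \<in> Min ` distinct_partitions n"
    then obtain P where P: "P \<in> distinct_partitions n" "s = Min P" by auto
    have fP: "finite P" "\<Sum>P = n" "0 \<notin> P" using P by (auto simp: distinct_partitions_def)
    have ne: "P \<noteq> {}" using fP assms by auto
    have "s \<in> P" using Min_in[OF fP(1) ne] P by simp
    moreover have "P \<subseteq> {1..n}" using Dfin[of n] P(1) by blast
    ultimately show "s \<in> {1..n}" by blast
  qed
  have "(\<Sum>P\<in>distinct_partitions n. f P) = (\<Sum>s\<in>{1..n}. \<Sum>P\<in>{P \<in> distinct_partitions n. Min P = s}. f P)"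
    using sum.group[OF finD _ img, of f] by simp
  also have "\<dots> = (\<Sum>s\<in>{1..n}. \<Sum>B\<in>{B \<in> Pow {s<..n}. \<Sum>B = n - s}. (-1)^card B * int (s^2))"
  proof (rule sum.cong[OF refl])
    fix s assume s: "s \<in> {1..n}"
    have inj: "inj_on (insert s) {B \<in> Pow {s<..n}. \<Sum>B = n - s}"
      by (rule inj_onI) (metis (no_types, lifting) Diff_insert_absorb greaterThanAtMost_iff
          less_irrefl mem_Collect_eq PowD subsetD)
    have "(\<Sum>P\<in>{P \<in> distinct_partitions n. Min P = s}. f P) = (\<Sum>B\<in>{B \<in> Pow {s<..n}. \<Sum>B = n - s}. f (insert s B))"
      unfolding Dslice[OF s] by (rule sum.reindex[OF inj, unfolded comp_def])
    also have "\<dots> = (\<Sum>B\<in>{B \<in> Pow {s<..n}. \<Sum>B = n - s}. (-1)^card B * int (s^2))"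
    proof (rule sum.cong[OF refl])
      fix B assume B: "B \<in> {B \<in> Pow {s<..n}. \<Sum>B = n - s}"
      have fB: "finite B" using B finite_subset by blast
      have sB: "s \<notin> B" using B by auto
      have "Min (insert s B) = s" using fB B by (intro Min_eqI) auto
      moreover have "card (insert s B) = Suc (card B)" using fB sB by simp
      ultimately show "f (insert s B) = (-1)^card B * int (s^2)"
        by (simp add: f_def nparts_def spart_def)
    qed
    finally show "(\<Sum>P\<in>{P \<in> distinct_partitions n. Min P = s}. f P) = \<dots>" .
  qed
  also have "\<dots> = (\<Sum>s\<le>n. of_nat (s^2) * phi n s) $ n"
  proof -
    have "(\<Sum>s\<le>n. of_nat (s^2) * phi n s) $ n = (\<Sum>s\<le>n. int (s^2) * (PP n s) $ (n - s))"
      unfolding fps_sum_nth nth_ofnat_mult phi_def by (simp add: fps_X_power_mult_nth)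
    also have "\<dots> = (\<Sum>s\<in>{1..n}. int (s^2) * (PP n s) $ (n - s))"
    proof -
      have sp: "{..n} = insert 0 {1..n}" by auto
      show ?thesis by (subst sp) simp
    qed
    also have "\<dots> = (\<Sum>s\<in>{1..n}. \<Sum>B\<in>{B \<in> Pow {s<..n}. \<Sum>B = n - s}. (-1)^card B * int (s^2))"
      unfolding PP_def prod_expand_nth[OF finite_greaterThanAtMost] sum_distrib_left
      by (simp add: mult.commute)
    finally show ?thesis by simp
  qed
  finally show ?thesis unfolding f_def .
qed



definition Cs :: "nat \<Rightarrow> nat \<Rightarrow> nat \<Rightarrow> nat set" where
  "Cs n a b = {i\<in>{0..n}. 0 < i \<and> a dvd i \<and> 0 < n - i \<and> b dvd (n - i)}"

lemma Cs_sub: "Cs n a b \<subseteq> {0..n}" unfolding Cs_def by blast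
lemma Cs_fin: "finite (Cs n a b)" by (rule finite_subset[OF Cs_sub]) simp

lemma ind_sum: "finite A \<Longrightarrow> (\<Sum>i\<in>A. if P i then 1 else 0 :: int) = int (card {i\<in>A. P i})"
  by (simp add: sum.If_cases Int_def conj_commute)

lemma ifmult: "(if P then 1 else 0 :: int) * (if Q then 1 else 0) = (if P \<and> Q then 1 else 0)"
  by simp

lemma geo_prod_nth:
  assumes "a \<ge> 1" "b \<ge> 1"
  shows "(geo a * geo b) $ n = int (card (Cs n a b))"
proof -
  have "(geo a * geo b) $ n = (\<Sum>i=0..n. if 0 < i \<and> a dvd i \<and> 0 < n - i \<and> b dvd (n - i) then 1 else 0)"
    unfolding fps_mult_nth geo_nth[OF assms(1)] geo_nth[OF assms(2)]
    by (intro sum.cong refl) (simp only: ifmult conj_assoc)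
  also have "\<dots> = int (card {i\<in>{0..n}. 0 < i \<and> a dvd i \<and> 0 < n - i \<and> b dvd (n - i)})"
    by (rule ind_sum) simp
  finally show ?thesis unfolding Cs_def .
qed

lemma divset: fixes n :: nat assumes "n \<ge> 1" shows "{d. d dvd n} = {a\<in>{1..n}. a dvd n}"
proof (intro equalityI subsetI)
  fix x assume "x \<in> {d. d dvd n}"
  then have x: "x dvd n" by simp
  have "x \<noteq> 0"
  proof
    assume "x = 0" with x have "n = 0" by simp
    with assms show False by simp
  qed
  moreover have "x \<le> n" using x assms by (intro dvd_imp_le) simp_all
  ultimately show "x \<in> {a\<in>{1..n}. a dvd n}" using x by simp
next
  fix x assume "x \<in> {a\<in>{1..n}. a dvd n}"
  then show "x \<in> {d. d dvd n}" by simp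
qed
lemma card_Cs_diag:
  assumes "a \<ge> 1" "n \<ge> 1"
  shows "card (Cs n a a) = (if a dvd n then n div a - 1 else 0)"
proof (cases "a dvd n")
  case True
  then obtain m where m: "n = a * m" by blast
  have "Cs n a a = (\<lambda>j. a * j) ` {1..<m}"
  proof (intro equalityI subsetI)
    fix i assume "i \<in> Cs n a a"
    then have i: "0 < i" "i < n" "a dvd i" unfolding Cs_def by auto
    then obtain j where j: "i = a * j" by blast
    have "a * j < a * m" using i(2) j m by simp
    then have "j < m" by simp
    moreover have "1 \<le> j" using i(1) j by (cases j) auto
    ultimately show "i \<in> (\<lambda>j. a * j) ` {1..<m}" using j by auto
  next
    fix i assume "i \<in> (\<lambda>j. a * j) ` {1..<m}"
    then obtain j where j0: "j \<in> {1..<m}" "i = a * j" by blast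
    then have j: "i = a * j" "1 \<le> j" "j < m" by auto
    have "0 < i" using j assms by simp
    moreover have "i < n" using j m assms by simp
    moreover have "a dvd (n - i)" using j m by (simp add: right_diff_distrib'[symmetric])
    ultimately show "i \<in> Cs n a a" unfolding Cs_def using j by auto
  qed
  moreover have "inj_on (\<lambda>j. a * j) {1..<m}" using assms by (intro inj_onI) simp
  ultimately have "card (Cs n a a) = m - 1" by (simp add: card_image)
  then show ?thesis using True m assms by simp
next
  case False
  have "Cs n a a = {}"
  proof (rule ccontr)
    assume "Cs n a a \<noteq> {}"
    then obtain i where "0 < i" "i < n" "a dvd i" "a dvd (n - i)" unfolding Cs_def by auto
    then have "a dvd (i + (n - i))" by (intro dvd_add)
    moreover have "i + (n - i) = n" using \<open>i < n\<close> by simp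
    ultimately show False using False by simp
  qed
  then show ?thesis using False by simp
qed

lemma divdiv: fixes a n :: nat assumes "a dvd n" "n > 0" shows "n div (n div a) = a" "(n div a) dvd n"
proof -
  obtain k where k: "n = a * k" using assms(1) by blast
  have "a > 0" "k > 0" using k assms(2) by auto
  then show "n div (n div a) = a" "(n div a) dvd n" using k by auto
qed

lemma sum_div_sigma: assumes "n \<ge> 1" shows "(\<Sum>a\<in>{d. d dvd n}. n div a) = sigma n"
  unfolding sigma_def
proof (rule sum.reindex_bij_witness[of _ "\<lambda>a. n div a" "\<lambda>a. n div a"])
  fix a assume "a \<in> {d. d dvd n}"
  then have a: "a dvd n" by simp
  have n: "n > 0" using assms by simp
  show "n div (n div a) = a" by (rule divdiv(1)[OF a n])
  show "n div a \<in> {d. d dvd n}" using divdiv(2)[OF a n] by simp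
  show "n div (n div a) = a" by (rule divdiv(1)[OF a n])
  show "n div a \<in> {d. d dvd n}" using divdiv(2)[OF a n] by simp
  show "n div a = n div a" ..
qed



definition Tlt :: "nat \<Rightarrow> (nat \<times> nat \<times> nat) set" where
  "Tlt n = {(a,b,i). a \<in> {1..n} \<and> b \<in> {1..n} \<and> a < b \<and> i \<in> Cs n a b}"

definition fM :: "nat \<Rightarrow> nat \<times> nat \<times> nat \<Rightarrow> nat multiset" where
  "fM n x = (case x of (a,b,i) \<Rightarrow> replicate_mset (i div a) a + replicate_mset ((n-i) div b) b)"

definition gM :: "nat multiset \<Rightarrow> nat \<times> nat \<times> nat" where
  "gM M = (Min (set_mset M), Max (set_mset M), Min (set_mset M) * count M (Min (set_mset M)))"

lemma two_decomp:
  assumes "set_mset M = {a, b}" "a \<noteq> b"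
  shows "M = replicate_mset (count M a) a + replicate_mset (count M b) b"
proof (rule multiset_eqI)
  fix x
  show "count M x = count (replicate_mset (count M a) a + replicate_mset (count M b) b) x"
  proof (cases "x = a \<or> x = b")
    case True
    then show ?thesis using assms(2) by auto
  next
    case False
    then have "x \<notin># M" using assms(1) by auto
    then show ?thesis using False by (simp add: not_in_iff)
  qed
qed

lemma fM_props:
  assumes "(a,b,i) \<in> Tlt n"
  shows "fM n (a,b,i) \<in> {M \<in> partitions n. card (set_mset M) = 2}"
    and "gM (fM n (a,b,i)) = (a,b,i)"
proof -
  from assms have a: "1 \<le> a" "a \<le> n" and b: "1 \<le> b" "b \<le> n" and ab: "a < b"
    and i: "0 < i" "i \<le> n" "a dvd i" "0 < n - i" "b dvd (n - i)"
    unfolding Tlt_def Cs_def by auto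
  define k1 where "k1 = i div a"
  define k2 where "k2 = (n - i) div b"
  have ik1: "i = a * k1" unfolding k1_def using i(3) by simp
  have ik2: "n - i = b * k2" unfolding k2_def using i(5) by simp
  have k1: "k1 \<ge> 1" using ik1 i(1) by (cases k1) auto
  have k2: "k2 \<ge> 1" using ik2 i(4) by (cases k2) auto
  define M where "M = replicate_mset k1 a + replicate_mset k2 b"
  have fMe: "fM n (a,b,i) = M" unfolding fM_def M_def k1_def k2_def by simp
  have set: "set_mset M = {a,b}" unfolding M_def using k1 k2 by auto
  have cnt: "count M a = k1" unfolding M_def using ab by simp
  have "sum_mset M = k1 * a + k2 * b" unfolding M_def by simp
  also have "\<dots> = i + (n - i)" using ik1 ik2 by (simp add: mult.commute)
  also have "\<dots> = n" using i(2) by simp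
  finally have sM: "sum_mset M = n" .
  have z: "0 \<notin># M" using set a b by auto
  have c2: "card (set_mset M) = 2" using set ab by simp
  show "fM n (a,b,i) \<in> {M \<in> partitions n. card (set_mset M) = 2}"
    unfolding fMe partitions_def using sM z c2 by simp
  have mn: "Min (set_mset M) = a" "Max (set_mset M) = b" using set ab by auto
  show "gM (fM n (a,b,i)) = (a,b,i)"
    unfolding fMe gM_def mn cnt using ik1 by simp
qed

lemma gM_props:
  assumes "M \<in> {M \<in> partitions n. card (set_mset M) = 2}"
  shows "gM M \<in> Tlt n" and "fM n (gM M) = M"
proof -
  from assms have z: "0 \<notin># M" and sM: "sum_mset M = n" and c2: "card (set_mset M) = 2"
    unfolding partitions_def by auto
  obtain x y where xy: "set_mset M = {x,y}" "x \<noteq> y" using c2 unfolding card_2_iff by blast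
  define a where "a = Min (set_mset M)"
  define b where "b = Max (set_mset M)"
  have ab: "a < b" "set_mset M = {a,b}" using xy unfolding a_def b_def by (auto simp: min_def max_def)
  define ca where "ca = count M a"
  define cb where "cb = count M b"
  have Md: "M = replicate_mset ca a + replicate_mset cb b"
    unfolding ca_def cb_def using two_decomp[OF ab(2)] ab(1) by simp
  have ca: "ca \<ge> 1" unfolding ca_def using ab(2) by (simp add: Suc_le_eq)
  have cb: "cb \<ge> 1" unfolding cb_def using ab(2) by (simp add: Suc_le_eq)
  have n: "n = ca * a + cb * b" using sM Md by simp
  have a1: "a \<ge> 1" using z ab(2) by (cases a) auto
  have b1: "b \<ge> 1" using a1 ab by simp
  have "b \<le> cb * b" using cb by simp
  then have bn: "b \<le> n" using n by linarith
  define i where "i = a * ca"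
  have i: "0 < i" "i \<le> n" "a dvd i" "n - i = b * cb"
    unfolding i_def using a1 ca n by (auto simp: mult.commute)
  have i4: "0 < n - i" using i(4) b1 cb by simp
  then have i5: "i < n" by simp
  have gMe: "gM M = (a, b, i)" unfolding gM_def a_def[symmetric] b_def[symmetric] ca_def[symmetric] i_def ..
  show "gM M \<in> Tlt n"
    unfolding gMe Tlt_def Cs_def using a1 ab(1) bn b1 i i4 i5 by auto
  have "i div a = ca" unfolding i_def using a1 by simp
  moreover have "(n - i) div b = cb" unfolding i(4) using b1 by simp
  ultimately show "fM n (gM M) = M" unfolding gMe fM_def using Md by simp
qed

lemma card_Tlt: "card (Tlt n) = p2 n"
proof -
  have "bij_betw (fM n) (Tlt n) {M \<in> partitions n. card (set_mset M) = 2}"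
  proof (rule bij_betw_byWitness[where f'=gM])
    show "\<forall>x\<in>Tlt n. gM (fM n x) = x" using fM_props(2) by auto
    show "\<forall>M\<in>{M \<in> partitions n. card (set_mset M) = 2}. fM n (gM M) = M" using gM_props(2) by blast
    show "fM n ` Tlt n \<subseteq> {M \<in> partitions n. card (set_mset M) = 2}" using fM_props(1) by auto
    show "gM ` {M \<in> partitions n. card (set_mset M) = 2} \<subseteq> Tlt n" using gM_props(1) by blast
  qed
  then show ?thesis unfolding p2_def by (rule bij_betw_same_card)
qed



definition sw :: "nat \<Rightarrow> nat \<times> nat \<times> nat \<Rightarrow> nat \<times> nat \<times> nat" where
  "sw n x = (case x of (a,b,i) \<Rightarrow> (b,a,n-i))"

lemma Cs_swap: "i \<in> Cs n a b \<Longrightarrow> n - i \<in> Cs n b a"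
  unfolding Cs_def by auto

lemma Cs_le: "i \<in> Cs n a b \<Longrightarrow> i \<le> n" unfolding Cs_def by auto

definition Tr :: "nat \<Rightarrow> (nat \<times> nat \<times> nat) set" where
  "Tr n = Sigma {1..n} (\<lambda>a. Sigma ({1..n}-{a}) (\<lambda>b. Cs n a b))"

lemma Tr_split: "Tr n = Tlt n \<union> sw n ` Tlt n"
proof (intro equalityI subsetI)
  fix x assume x: "x \<in> Tr n"
  obtain a b i where xe: "x = (a,b,i)" by (cases x) auto
  from x have h: "a \<in> {1..n}" "b \<in> {1..n}" "a \<noteq> b" "i \<in> Cs n a b" unfolding xe Tr_def by auto
  show "x \<in> Tlt n \<union> sw n ` Tlt n"
  proof (cases "a < b")
    case True
    then show ?thesis unfolding xe Tlt_def using h by auto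
  next
    case False
    then have "b < a" using h(3) by simp
    then have "(b,a,n-i) \<in> Tlt n" unfolding Tlt_def using h Cs_swap by auto
    moreover have "sw n (b,a,n-i) = x" unfolding sw_def xe using Cs_le[OF h(4)] by simp
    ultimately show ?thesis by (metis UnI2 image_eqI)
  qed
next
  fix x assume x: "x \<in> Tlt n \<union> sw n ` Tlt n"
  show "x \<in> Tr n"
  proof (cases "x \<in> Tlt n")
    case True
    then show ?thesis unfolding Tlt_def Tr_def by auto
  next
    case False
    then obtain y where y: "y \<in> Tlt n" "x = sw n y" using x by auto
    obtain a b i where ye: "y = (a,b,i)" by (cases y) auto
    from y(1) have h: "a \<in> {1..n}" "b \<in> {1..n}" "a < b" "i \<in> Cs n a b" unfolding ye Tlt_def by auto
    have "x = (b,a,n-i)" unfolding y ye sw_def by simp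
    then show ?thesis unfolding Tr_def using h Cs_swap[OF h(4)] by auto
  qed
qed

lemma card_Tr: "card (Tr n) = 2 * p2 n"
proof -
  have fin: "finite (Tlt n)"
  proof (rule finite_subset)
    show "Tlt n \<subseteq> {1..n} \<times> {1..n} \<times> {0..n}" unfolding Tlt_def Cs_def by auto
  qed simp
  have inj: "inj_on (sw n) (Tlt n)"
  proof (rule inj_onI)
    fix x y assume "x \<in> Tlt n" "y \<in> Tlt n" "sw n x = sw n y"
    moreover obtain a b i where "x = (a,b,i)" by (cases x) auto
    moreover obtain a' b' i' where "y = (a',b',i')" by (cases y) auto
    ultimately show "x = y" unfolding sw_def Tlt_def Cs_def by auto
  qed
  have disj: "Tlt n \<inter> sw n ` Tlt n = {}"
  proof (rule ccontr)
    assume "Tlt n \<inter> sw n ` Tlt n \<noteq> {}"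
    then obtain y where y: "y \<in> Tlt n" "sw n y \<in> Tlt n" by auto
    obtain a b i where ye: "y = (a,b,i)" by (cases y) auto
    from y show False unfolding ye sw_def Tlt_def by auto
  qed
  have "card (Tr n) = card (Tlt n) + card (sw n ` Tlt n)"
    unfolding Tr_split using fin disj by (simp add: card_Un_disjoint)
  also have "card (sw n ` Tlt n) = card (Tlt n)" using inj by (rule card_image)
  finally show ?thesis using card_Tlt by simp
qed

lemma MM_nth: assumes "n \<ge> 1" shows "MM n $ n = 2 * int (p2 n)"
proof -
  have "MM n $ n = (\<Sum>a\<in>{1..n}. \<Sum>b\<in>{1..n}-{a}. int (card (Cs n a b)))"
    unfolding MM_def fps_sum_nth by (intro sum.cong refl) (simp add: geo_prod_nth)
  also have "\<dots> = int (\<Sum>a\<in>{1..n}. card (Sigma ({1..n}-{a}) (\<lambda>b. Cs n a b)))"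
    by (simp add: card_SigmaI Cs_fin)
  also have "(\<Sum>a\<in>{1..n}. card (Sigma ({1..n}-{a}) (\<lambda>b. Cs n a b))) = card (Tr n)"
    unfolding Tr_def by (subst card_SigmaI) (auto simp: Cs_fin)
  finally show ?thesis using card_Tr by simp
qed



lemma LL_nth': assumes "n \<ge> 1" shows "LL n $ n = (\<Sum>a\<in>{1..n}. if a dvd n then 1 else 0)"
  unfolding LL_def fps_sum_nth using assms by (intro sum.cong refl) (simp add: geo_nth)

lemma SS_nth: shows "SS n $ n = (\<Sum>a\<in>{1..n}. int (card (Cs n a a)))"
  unfolding SS_def fps_sum_nth by (intro sum.cong refl) (simp add: geo_prod_nth)

lemma SSLL_nth: assumes "n \<ge> 1" shows "2 * SS n $ n + LL n $ n = 2 * int (sigma n) - int (ndiv n)"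
proof -
  have "2 * SS n $ n + LL n $ n = (\<Sum>a\<in>{1..n}. 2 * int (card (Cs n a a)) + (if a dvd n then 1 else 0))"
    unfolding SS_nth LL_nth'[OF assms] by (simp add: sum.distrib sum_distrib_left)
  also have "\<dots> = (\<Sum>a\<in>{1..n}. if a dvd n then 2 * int (n div a) - 1 else 0)"
  proof (intro sum.cong refl)
    fix a assume a: "a \<in> {1..n}"
    show "2 * int (card (Cs n a a)) + (if a dvd n then 1 else 0) = (if a dvd n then 2 * int (n div a) - 1 else 0)"
    proof (cases "a dvd n")
      case True
      have "n div a \<ge> 1" using a True by (auto simp: div_greater_zero_iff)
      then show ?thesis using card_Cs_diag[of a n] a assms True by (simp add: of_nat_diff)
    next
      case False
      then show ?thesis using card_Cs_diag[of a n] a assms by simp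
    qed
  qed
  also have "\<dots> = (\<Sum>a\<in>{a\<in>{1..n}. a dvd n}. 2 * int (n div a) - 1)"
    by (subst sum.inter_filter) auto
  also have "\<dots> = 2 * int (\<Sum>a\<in>{d. d dvd n}. n div a) - int (card {d. d dvd n})"
    unfolding divset[OF assms] by (simp add: sum_subtractf sum_distrib_left)
  finally show ?thesis unfolding sum_div_sigma[OF assms] ndiv_def .
qed

theorem mainTheorem7:
  fixes n :: nat
  assumes "n \<ge> 1"
  shows "(\<Sum>P\<in>distinct_partitions n. (-1::int) ^ (nparts P - 1) * int (spart P) ^ 2)
         = 2 * int (sigma n) - int (ndiv n) + 2 * int (p2 n)"
proof -
  define A where "A = (\<Sum>s\<le>n. of_nat (s^2) * phi n s)"
  define B where "B = MM n + 2 * SS n + LL n"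
  obtain k where k: "A - B = XX^Suc n * k" using key[OF assms] unfolding A_def B_def by blast
  have "(A - B) $ n = 0" unfolding k by (simp only: fps_X_power_mult_nth) simp
  then have "A $ n = B $ n" by simp
  also have "B $ n = MM n $ n + (2 * SS n $ n + LL n $ n)" 
  proof -
    have "(2 * SS n) $ n = 2 * SS n $ n" by (simp only: mult_2 fps_add_nth)
    then show ?thesis unfolding B_def fps_add_nth by simp
  qed
  also have "\<dots> = 2 * int (p2 n) + (2 * int (sigma n) - int (ndiv n))"
    unfolding MM_nth[OF assms] SSLL_nth[OF assms] ..
  finally show ?thesis unfolding LHS_eq[OF assms] A_def by simp
qed


end
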